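(* Let $\mathcal R$ be a reaction network and $\mathcal U\subseteq\mathcal S$ a set of non-interacting species. Let $r_0=(y_0,y_0')\in\mathcal R_{\mathcal U}'$, $m\ge1$, $r_{1i}=(y_i,y_i')\in\mathcal R_{\mathcal U}$ for $i=1,\dots,m$, and $r_1=\oplus_{i=1}^m r_{1i}$, and suppose $r_0\oplus r_1\notin\overline{\mathcal R}_{\mathcal U}$. Then: (i) $r_0\in\mathcal R_{\mathcal U}'\setminus\mathcal R_{\mathcal U}$ and $r_{1i}\in\mathcal R_{\mathcal U}\cap\mathcal R_{\mathcal U}'$ for $i=1,\dots,m-1$; (ii) $\mathrm{supp}(y_i)\cap\mathcal U=\mathrm{supp}(y_{i-1}')\cap\mathcal U\neq\emptyset$ for $i=1,\dots,m$; (iii) if $r_0\oplus r_1\in\overline{\mathcal R}_0$, then $r_{1m}\in\mathcal R_{\mathcal U}\setminus\mathcal R_{\mathcal U}'$. Conversely, let $r_0\in\mathcal R_{\mathcal U}'$, $r_{1i}\in\mathcal R_{\mathcal U}$ ($i=1,\dots,m$), $r_1=\oplus_{i=1}^m r_{1i}$, and suppose (i) and (ii) hold. Then $r_0\oplus r_1\notin\overline{\mathcal R}_{\mathcal U}$; and if furthermore $r_{1m}\in\mathcal R_{\mathcal U}\setminus\mathcal R_{\mathcal U}'$, then $r_0\oplus r_1\in\overline{\mathcal R}_0$.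
   Context: Species $S_1,\dots,S_n$ are the unit vectors of $\mathbb{N}_0^n$ and $\mathcal S=\{S_1,\dots,S_n\}$; for $x\in\mathbb{N}_0^n$, $\mathrm{supp}(x)=\{S_k: x^k>0\}$. A reaction network (RN) is a (possibly infinite) subset $\mathcal R\subseteq\mathbb{N}_0^n\times\mathbb{N}_0^n$ containing no $(y,y')$ with $y=y'$; elements $(y,y')$ are reactions $y\to y'$ with reactant $y$ and product $y'$. For $r_1=(y_1,y_1'),\ r_2=(y_2,y_2')$ define $r_1\oplus r_2=(y_1+0\vee(y_2-y_1'),\ y_2'+0\vee(y_1'-y_2))$ ($\vee$ componentwise maximum); it is associative. $\mathrm{cl}(A)$ is the set of all finite $\oplus$-sums of elements of $A$, including $(0,0)$. For $\mathcal U\subseteq\mathcal S$ and a set $B\subseteq\mathbb{N}_0^n\times\mathbb{N}_0^n$ write $B_{\mathcal U}=\{(y,y')\in B:\mathrm{supp}(y)\cap\mathcal U\neq\emptyset\}$ and $B_{\mathcal U}'=\{(y,y')\in B:\mathrm{supp}(y')\cap\mathcal U\neq\emptyset\}$. Set $\overline{\mathcal R}=\mathrm{cl}(\mathcal R)$ and $\overline{\mathcal R}_0=\overline{\mathcal R}\setminus(\overline{\mathcal R}_{\mathcal U}\cup\overline{\mathcal R}_{\mathcal U}')$. $\mathcal U$ consists of non-interacting species (in $\mathcal R$) if for every reaction $y\to y'\in\mathcal R$, $\sum_{S_i\in\mathcal U}y^i\le1$ and $\sum_{S_i\in\mathcal U}(y')^i\le1$. *)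

theory Defs
  imports Main
begin

text \<open>Species are the elements of a finite type 's (the indices of the unit vectors
  of N_0^n, n = CARD('s)); complexes (elements of N_0^n) are functions 's => nat.\<close>

type_synonym 's complex = "'s \<Rightarrow> nat"
type_synonym 's reaction = "'s complex \<times> 's complex"

definition supp :: "'s complex \<Rightarrow> 's set" where
  "supp x = {k. x k > 0}"

definition reaction_network :: "'s reaction set \<Rightarrow> bool" where
  "reaction_network R \<longleftrightarrow> (\<forall>y. (y, y) \<notin> R)"

text \<open>r1 (+) r2 = (y1 + 0 v (y2 - y1'), y2' + 0 v (y1' - y2)); for naturals,
  0 v (a - b) is truncated subtraction a - b.\<close>
definition oplus :: "'s reaction \<Rightarrow> 's reaction \<Rightarrow> 's reaction" (infixr "\<oplus>\<^sub>R" 65) where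
  "r1 \<oplus>\<^sub>R r2 = (case r1 of (y1, y1') \<Rightarrow> case r2 of (y2, y2') \<Rightarrow>
     (\<lambda>k. y1 k + nat (max 0 (int (y2 k) - int (y1' k))),
      \<lambda>k. y2' k + nat (max 0 (int (y1' k) - int (y2 k)))))"

fun oplus_list :: "'s reaction list \<Rightarrow> 's reaction" where
  "oplus_list [] = (\<lambda>_. 0, \<lambda>_. 0)"
| "oplus_list (r # rs) = r \<oplus>\<^sub>R oplus_list rs"

definition cl :: "'s reaction set \<Rightarrow> 's reaction set" where
  "cl A = {oplus_list rs | rs. set rs \<subseteq> A}"

definition sub_U :: "'s set \<Rightarrow> 's reaction set \<Rightarrow> 's reaction set" where
  "sub_U U B = {(y, y') \<in> B. supp y \<inter> U \<noteq> {}}"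

definition sub_U' :: "'s set \<Rightarrow> 's reaction set \<Rightarrow> 's reaction set" where
  "sub_U' U B = {(y, y') \<in> B. supp y' \<inter> U \<noteq> {}}"

definition cl0 :: "'s set \<Rightarrow> 's reaction set \<Rightarrow> 's reaction set" where
  "cl0 U R = cl R - (sub_U U (cl R) \<union> sub_U' U (cl R))"

definition non_interacting :: "'s set \<Rightarrow> 's reaction set \<Rightarrow> bool" where
  "non_interacting U R \<longleftrightarrow>
     (\<forall>(y, y') \<in> R. (\<Sum>i\<in>U. y i) \<le> 1 \<and> (\<Sum>i\<in>U. y' i) \<le> 1)"

end

theory Submission
  imports Defs
begin

lemma fst_oplus: "fst (a \<oplus>\<^sub>R b) k = fst a k + (fst b k - snd a k)"
  by (cases a; cases b) (auto simp: oplus_def)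
lemma snd_oplus: "snd (a \<oplus>\<^sub>R b) k = snd b k + (snd a k - fst b k)"
  by (cases a; cases b) (auto simp: oplus_def)
lemma mem_subU: "x \<in> sub_U U B \<longleftrightarrow> x \<in> B \<and> supp (fst x) \<inter> U \<noteq> {}"
  by (cases x) (auto simp: sub_U_def)
lemma mem_subU': "x \<in> sub_U' U B \<longleftrightarrow> x \<in> B \<and> supp (snd x) \<inter> U \<noteq> {}"
  by (cases x) (auto simp: sub_U'_def)
lemma unit_same:
  fixes f :: "'a \<Rightarrow> nat"
  assumes "finite U" "sum f U \<le> 1" "k \<in> U" "j \<in> U" "f k > 0" "f j > 0" shows "j = k"
proof (rule ccontr)
  assume "j \<noteq> k"
  have "sum f {k,j} \<le> sum f U" by (rule sum_mono2) (use assms in auto)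
  with \<open>j\<noteq>k\<close> assms show False by simp
qed
lemma unit_le1:
  fixes f :: "'a \<Rightarrow> nat"
  assumes "finite U" "sum f U \<le> 1" "k \<in> U" shows "f k \<le> 1"
  using member_le_sum[of k U f] assms by auto
lemma eq_on:
  fixes f g :: "'a \<Rightarrow> nat"
  assumes "finite U" "sum f U \<le> 1" "sum g U \<le> 1" "supp f \<inter> U = supp g \<inter> U" "k \<in> U"
  shows "f k = g k"
proof -
  have "f k > 0 \<longleftrightarrow> g k > 0" using assms(4,5) by (auto simp: supp_def)
  moreover have "f k \<le> 1" "g k \<le> 1" using unit_le1[OF assms(1,2,5)] unit_le1[OF assms(1,3,5)] by auto
  ultimately show ?thesis by linarith
qed
lemma supp_eq_le:
  fixes f g :: "'a \<Rightarrow> nat"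
  assumes "finite U" "sum f U \<le> 1" "sum g U \<le> 1" "\<forall>k\<in>U. f k \<le> g k" "supp f \<inter> U \<noteq> {}"
  shows "supp f \<inter> U = supp g \<inter> U"
proof -
  obtain u where u: "u \<in> U" "f u > 0" using assms(5) by (auto simp: supp_def)
  have gu: "g u > 0" using u assms(4) by force
  show ?thesis
  proof (auto simp: supp_def)
    fix x assume "x \<in> U" "0 < f x" thus "0 < g x" using assms(4) by force
  next
    fix x assume x: "x \<in> U" "0 < g x"
    then have "x = u" using unit_same[OF assms(1,3) u(1) x(1) gu x(2)] by simp
    thus "0 < f x" using u by simp
  qed
qed
lemma fst_ge: "fst r k \<le> fst (oplus_list (r # rs)) k"
  by (simp add: fst_oplus)
lemma snd_last: "rs \<noteq> [] \<Longrightarrow> snd (last rs) k \<le> snd (oplus_list rs) k"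
proof (induction rs)
  case Nil then show ?case by simp
next
  case (Cons a rs)
  show ?case
  proof (cases "rs = []")
    case True then show ?thesis by (simp add: snd_oplus)
  next
    case False
    have "snd (last (a # rs)) k = snd (last rs) k" using False by simp
    also have "\<dots> \<le> snd (oplus_list rs) k" using Cons.IH False by simp
    also have "\<dots> \<le> snd (oplus_list (a # rs)) k" by (simp add: snd_oplus)
    finally show ?thesis .
  qed
qed
lemma Cdef: "i \<le> m \<Longrightarrow> oplus_list (map r [i..<m+1]) = r i \<oplus>\<^sub>R oplus_list (map r [Suc i..<m+1])"
proof -
  assume "i \<le> m"
  then have "[i..<m+1] = i # [Suc i..<m+1]" by (intro upt_conv_Cons) simp
  then show ?thesis by (simp only: list.map oplus_list.simps)
qed
theorem lemma4p9:
  fixes R :: "('s::finite) reaction set" and U :: "'s set"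
    and r :: "nat \<Rightarrow> 's reaction" and m :: nat
  assumes RN: "reaction_network R"
    and NI: "non_interacting U R"
    and m1: "m \<ge> 1"
    and r0: "r 0 \<in> sub_U' U R"
    and r1i: "\<forall>i\<in>{1..m}. r i \<in> sub_U U R"
  shows
    "(r 0 \<oplus>\<^sub>R oplus_list (map r [1..<m+1]) \<notin> sub_U U (cl R) \<longrightarrow>
        (r 0 \<in> sub_U' U R - sub_U U R
          \<and> (\<forall>i\<in>{1..<m}. r i \<in> sub_U U R \<inter> sub_U' U R))
      \<and> (\<forall>i\<in>{1..m}. supp (fst (r i)) \<inter> U = supp (snd (r (i - 1))) \<inter> U
                     \<and> supp (fst (r i)) \<inter> U \<noteq> {})
      \<and> (r 0 \<oplus>\<^sub>R oplus_list (map r [1..<m+1]) \<in> cl0 U R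
           \<longrightarrow> r m \<in> sub_U U R - sub_U' U R))
   \<and>
    ((r 0 \<in> sub_U' U R - sub_U U R
       \<and> (\<forall>i\<in>{1..<m}. r i \<in> sub_U U R \<inter> sub_U' U R))
      \<and> (\<forall>i\<in>{1..m}. supp (fst (r i)) \<inter> U = supp (snd (r (i - 1))) \<inter> U
                     \<and> supp (fst (r i)) \<inter> U \<noteq> {})
     \<longrightarrow> r 0 \<oplus>\<^sub>R oplus_list (map r [1..<m+1]) \<notin> sub_U U (cl R)
         \<and> (r m \<in> sub_U U R - sub_U' U R
              \<longrightarrow> r 0 \<oplus>\<^sub>R oplus_list (map r [1..<m+1]) \<in> cl0 U R))"
  proof -
  have finU: "finite U" by simp
  have NIf: "\<And>x. x \<in> R \<Longrightarrow> sum (fst x) U \<le> 1" and NIs: "\<And>x. x \<in> R \<Longrightarrow> sum (snd x) U \<le> 1"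
    using NI unfolding non_interacting_def by auto
  define C where "C i = oplus_list (map r [i..<m+1])" for i
  define T where "T = r 0 \<oplus>\<^sub>R C 1"
  have CS: "\<And>i. i \<le> m \<Longrightarrow> C i = r i \<oplus>\<^sub>R C (Suc i)" unfolding C_def by (rule Cdef)
  have Cm1: "C (Suc m) = (\<lambda>_. 0, \<lambda>_. 0)" unfolding C_def by simp
  have rR: "\<And>i. i \<le> m \<Longrightarrow> r i \<in> R"
  proof -
    fix i assume "i \<le> m" then show "r i \<in> R"
      using r0 r1i by (cases "i = 0") (auto simp: mem_subU mem_subU')
  qed
  have TL: "T = oplus_list (map r [0..<m+1])" unfolding T_def C_def
    by (subst upt_conv_Cons[of 0]) auto
  have Tcl: "T \<in> cl R" unfolding TL cl_def
    by (rule CollectI, rule exI[of _ "map r [0..<m+1]"]) (use rR in auto)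
  have Tsnd: "\<And>k. snd (r m) k \<le> snd T k"
  proof -
    fix k have "snd (last (map r [0..<m+1])) k \<le> snd T k" unfolding TL
      by (rule snd_last) simp
    then show "snd (r m) k \<le> snd T k" by simp
  qed
  have Yge: "\<And>i k. i \<le> m \<Longrightarrow> fst (r i) k \<le> fst (C i) k"
    using CS by (simp add: fst_oplus)
  have sU1: "\<And>i. 1 \<le> i \<Longrightarrow> i \<le> m \<Longrightarrow> supp (fst (r i)) \<inter> U \<noteq> {}"
    using r1i by (auto simp: mem_subU)
  have A: "T \<notin> sub_U U (cl R) \<longrightarrow>
        (r 0 \<in> sub_U' U R - sub_U U R
          \<and> (\<forall>i\<in>{1..<m}. r i \<in> sub_U U R \<inter> sub_U' U R))
      \<and> (\<forall>i\<in>{1..m}. supp (fst (r i)) \<inter> U = supp (snd (r (i - 1))) \<inter> U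
                     \<and> supp (fst (r i)) \<inter> U \<noteq> {})
      \<and> (T \<in> cl0 U R \<longrightarrow> r m \<in> sub_U U R - sub_U' U R)"
  proof
    assume nT: "T \<notin> sub_U U (cl R)"
    then have T0: "\<forall>k\<in>U. fst T k = 0" using Tcl by (auto simp: mem_subU supp_def)
    then have y00: "\<forall>k\<in>U. fst (r 0) k = 0" and Y1: "\<forall>k\<in>U. fst (C 1) k \<le> snd (r 0) k"
      unfolding T_def by (auto simp: fst_oplus)
    have H: "\<forall>i. 1 \<le> i \<longrightarrow> i \<le> m \<longrightarrow> (\<forall>k\<in>U. fst (C i) k \<le> snd (r (i - 1)) k)"
    proof (intro allI)
      fix i show "1 \<le> i \<longrightarrow> i \<le> m \<longrightarrow> (\<forall>k\<in>U. fst (C i) k \<le> snd (r (i - 1)) k)"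
      proof (induction i)
        case 0 then show ?case by simp
      next
        case (Suc i)
        show ?case
        proof (cases "i = 0")
          case True then show ?thesis using Y1 by simp
        next
          case False
          show ?thesis
          proof (intro impI)
            assume "1 \<le> Suc i" "Suc i \<le> m"
            with False Suc.IH have IH: "\<forall>k\<in>U. fst (C i) k \<le> snd (r (i - 1)) k" by simp
            have im: "i \<le> m" "1 \<le> i" using \<open>Suc i \<le> m\<close> False by auto
            have le: "\<forall>k\<in>U. fst (r i) k \<le> snd (r (i - 1)) k" using IH Yge[OF im(1)] le_trans by blast
            have se: "supp (fst (r i)) \<inter> U = supp (snd (r (i - 1))) \<inter> U"
              by (rule supp_eq_le[OF finU NIf[OF rR[OF im(1)]] NIs[OF rR] le sU1[OF im(2,1)]]) (use im in simp)
            have eq: "\<forall>k\<in>U. fst (r i) k = snd (r (i - 1)) k"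
              using eq_on[OF finU NIf[OF rR[OF im(1)]] NIs[OF rR] se] im by simp
            show "\<forall>k\<in>U. fst (C (Suc i)) k \<le> snd (r (Suc i - 1)) k"
            proof
              fix k assume k: "k \<in> U"
              have "fst (C i) k = fst (r i) k + (fst (C (Suc i)) k - snd (r i) k)"
                using CS[OF im(1)] by (simp add: fst_oplus)
              then show "fst (C (Suc i)) k \<le> snd (r (Suc i - 1)) k"
                using IH eq k by fastforce
            qed
          qed
        qed
      qed
    qed
    have ii: "\<forall>i\<in>{1..m}. supp (fst (r i)) \<inter> U = supp (snd (r (i - 1))) \<inter> U
                     \<and> supp (fst (r i)) \<inter> U \<noteq> {}"
    proof
      fix i assume "i \<in> {1..m}"
      then have im: "i \<le> m" "1 \<le> i" by auto
      have le: "\<forall>k\<in>U. fst (r i) k \<le> snd (r (i - 1)) k" using H im Yge[OF im(1)] le_trans by blast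
      have "supp (fst (r i)) \<inter> U = supp (snd (r (i - 1))) \<inter> U"
        by (rule supp_eq_le[OF finU NIf[OF rR[OF im(1)]] NIs[OF rR] le sU1[OF im(2,1)]]) (use im in simp)
      then show "supp (fst (r i)) \<inter> U = supp (snd (r (i - 1))) \<inter> U \<and> supp (fst (r i)) \<inter> U \<noteq> {}"
        using sU1[OF im(2,1)] by simp
    qed
    have i1: "r 0 \<in> sub_U' U R - sub_U U R" using r0 y00 by (auto simp: mem_subU supp_def)
    have i2: "\<forall>i\<in>{1..<m}. r i \<in> sub_U U R \<inter> sub_U' U R"
    proof
      fix i assume i: "i \<in> {1..<m}"
      then have "supp (fst (r (Suc i))) \<inter> U = supp (snd (r i)) \<inter> U \<and> supp (fst (r (Suc i))) \<inter> U \<noteq> {}"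
        using ii[rule_format, of "Suc i"] by auto
      then show "r i \<in> sub_U U R \<inter> sub_U' U R" using r1i i rR[of i] by (auto simp: mem_subU mem_subU')
    qed
    have iii: "T \<in> cl0 U R \<longrightarrow> r m \<in> sub_U U R - sub_U' U R"
    proof
      assume "T \<in> cl0 U R"
      then have "\<forall>k\<in>U. snd T k = 0" using Tcl unfolding cl0_def by (auto simp: mem_subU' supp_def)
      then have "\<forall>k\<in>U. snd (r m) k = 0" using Tsnd by (metis le_zero_eq)
      then show "r m \<in> sub_U U R - sub_U' U R" using r1i m1 by (auto simp: mem_subU' supp_def)
    qed
    show "(r 0 \<in> sub_U' U R - sub_U U R \<and> (\<forall>i\<in>{1..<m}. r i \<in> sub_U U R \<inter> sub_U' U R)) \<and>
      (\<forall>i\<in>{1..m}. supp (fst (r i)) \<inter> U = supp (snd (r (i - 1))) \<inter> U \<and> supp (fst (r i)) \<inter> U \<noteq> {}) \<and>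
      (T \<in> cl0 U R \<longrightarrow> r m \<in> sub_U U R - sub_U' U R)" using i1 i2 ii iii by blast
  qed
  have B: "(r 0 \<in> sub_U' U R - sub_U U R
       \<and> (\<forall>i\<in>{1..<m}. r i \<in> sub_U U R \<inter> sub_U' U R))
      \<and> (\<forall>i\<in>{1..m}. supp (fst (r i)) \<inter> U = supp (snd (r (i - 1))) \<inter> U
                     \<and> supp (fst (r i)) \<inter> U \<noteq> {})
     \<longrightarrow> T \<notin> sub_U U (cl R) \<and> (r m \<in> sub_U U R - sub_U' U R \<longrightarrow> T \<in> cl0 U R)"
  proof (intro impI)
    assume h: "(r 0 \<in> sub_U' U R - sub_U U R
       \<and> (\<forall>i\<in>{1..<m}. r i \<in> sub_U U R \<inter> sub_U' U R))
      \<and> (\<forall>i\<in>{1..m}. supp (fst (r i)) \<inter> U = supp (snd (r (i - 1))) \<inter> U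
                     \<and> supp (fst (r i)) \<inter> U \<noteq> {})"
    have y00: "\<forall>k\<in>U. fst (r 0) k = 0" using h rR[of 0] by (auto simp: mem_subU supp_def)
    have eqs: "\<And>i k. 1 \<le> i \<Longrightarrow> i \<le> m \<Longrightarrow> k \<in> U \<Longrightarrow> fst (r i) k = snd (r (i - 1)) k"
    proof -
      fix i k assume i: "1 \<le> i" "i \<le> m" "k \<in> U"
      show "fst (r i) k = snd (r (i - 1)) k"
      proof (rule eq_on[OF finU NIf[OF rR[of i]] NIs[OF rR[of "i - 1"]]])
        show "i \<le> m" "i - 1 \<le> m" "k \<in> U" using i by auto
        show "supp (fst (r i)) \<inter> U = supp (snd (r (i - 1))) \<inter> U"
          using h[THEN conjunct2] i by auto
      qed
    qed
    have D: "\<forall>j. j < m \<longrightarrow> (\<forall>k\<in>U. fst (C (m - j)) k = fst (r (m - j)) k)"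
    proof
      fix j show "j < m \<longrightarrow> (\<forall>k\<in>U. fst (C (m - j)) k = fst (r (m - j)) k)"
      proof (induction j)
        case 0 then show ?case using CS[of m] Cm1 by (simp add: fst_oplus)
      next
        case (Suc j)
        show ?case
        proof (intro impI ballI)
          fix k assume j: "Suc j < m" and k: "k \<in> U"
          have e: "Suc (m - Suc j) = m - j" using j by simp
          have "fst (C (m - Suc j)) k = fst (r (m - Suc j)) k + (fst (C (m - j)) k - snd (r (m - Suc j)) k)"
            using CS[of "m - Suc j"] e by (simp add: fst_oplus)
          also have "fst (C (m - j)) k = snd (r (m - Suc j)) k"
            proof -
            have e2: "m - j - 1 = m - Suc j" by simp
            have j1: "1 \<le> m - j" "m - j \<le> m" "j < m" using j by auto
            have "fst (C (m - j)) k = fst (r (m - j)) k" using Suc.IH j1(3) k by blast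
            also have "\<dots> = snd (r (m - Suc j)) k" using eqs[of "m - j" k, unfolded e2] j1 k by blast
            finally show ?thesis .
          qed
          finally show "fst (C (m - Suc j)) k = fst (r (m - Suc j)) k" by simp
        qed
      qed
    qed
    have Y1: "\<forall>k\<in>U. fst (C 1) k = snd (r 0) k"
      using D[rule_format, of "m - 1"] eqs[of 1] m1 by auto
    have nT: "T \<notin> sub_U U (cl R)"
      using y00 Y1 unfolding T_def by (auto simp: mem_subU supp_def fst_oplus)
    show "T \<notin> sub_U U (cl R) \<and> (r m \<in> sub_U U R - sub_U' U R \<longrightarrow> T \<in> cl0 U R)"
    proof (intro conjI impI nT)
      assume rm: "r m \<in> sub_U U R - sub_U' U R"
      then have ym: "\<forall>k\<in>U. snd (r m) k = 0" using rR[of m] by (auto simp: mem_subU' supp_def)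
      have P: "\<forall>j. j < m \<longrightarrow> (\<forall>k\<in>U. snd (C (m - j)) k = 0)"
      proof
        fix j show "j < m \<longrightarrow> (\<forall>k\<in>U. snd (C (m - j)) k = 0)"
        proof (induction j)
          case 0 then show ?case using CS[of m] Cm1 ym by (simp add: snd_oplus)
        next
          case (Suc j)
          show ?case
          proof (intro impI ballI)
            fix k assume j: "Suc j < m" and k: "k \<in> U"
            have e: "Suc (m - Suc j) = m - j" using j by simp
            have "snd (C (m - Suc j)) k = snd (C (m - j)) k + (snd (r (m - Suc j)) k - fst (C (m - j)) k)"
              using CS[of "m - Suc j"] e by (simp add: snd_oplus)
            also have "fst (C (m - j)) k = snd (r (m - Suc j)) k"
              proof -
              have e2: "m - j - 1 = m - Suc j" by simp
              have j1: "1 \<le> m - j" "m - j \<le> m" "j < m" using j by auto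
              have "fst (C (m - j)) k = fst (r (m - j)) k" using D j1(3) k by blast
              also have "\<dots> = snd (r (m - Suc j)) k" using eqs[of "m - j" k, unfolded e2] j1 k by blast
              finally show ?thesis .
            qed
            finally show "snd (C (m - Suc j)) k = 0" using Suc.IH j k by simp
          qed
        qed
      qed
      have P1: "\<forall>k\<in>U. snd (C 1) k = 0" using P[rule_format, of "m - 1"] m1 by auto
      have "T \<notin> sub_U' U (cl R)"
        using P1 Y1 unfolding T_def by (auto simp: mem_subU' supp_def snd_oplus)
      then show "T \<in> cl0 U R" using nT Tcl unfolding cl0_def by auto
    qed
  qed
  have C1: "oplus_list (map r [1..<m+1]) = C 1" unfolding C_def by simp
  show ?thesis unfolding C1 T_def[symmetric] using A B by blast
qed

end
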